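(* The forcing notion $Q_*$ is forcing equivalent to Sacks forcing.
   Context: Terms. Fix a set $X$ of variable symbols, each taking values in $\{0,1\}$. An $X$-term $t$ is given by a finite sequence of variables $(v_0,\dots,v_{l-1})$ ($l\ge0$) and a function $f:2^l\to2$; a variable $v$ is identified with the term $((v),\mathrm{id})$. An assignment is a function $a:X\to2$; it extends to terms by $t\circ a=f(v_0\circ a,\dots,v_{l-1}\circ a)$. A substitution $\phi$ maps each variable to an $X$-term; $t\circ\phi$ is obtained by replacing each variable $v$ in $t$ by $\phi(v)$, and for a family $\bar t=(t_i)$, $\bar t\circ\phi=(t_i\circ\phi)$. Terms are identified modulo $t=^*s$ iff $t\circ a=s\circ a$ for all assignments $a$. A term depends only on variables in $Y$ if it is $=^*$ to a term using only variables from $Y$. A term or variable $s$ is determined by terms $t_0,\dots,t_n$ if for all assignments $a,b$, $(t_i\circ a)_{i\le n}=(t_i\circ b)_{i\le n}$ implies $s\circ a=s\circ b$. Let $\tau(n,m)=n+\tfrac12(n+m)(n+m+1)$ and $(i,j)\unlhd(n,m)$ iff $\tau(i,j)\le\tau(n,m)$. With $X=\{x_{i,j}:i,j\in\omega\}$, $Q_*$ is the set of squares $\bar t=(t_{n,m})_{n,m\in\omega}$ of terms such that (1) $t_{n,m}$ depends only on variables $x_{i,j}$ with $(i,j)\unlhd(n,m)$, and (2) each $x_{i,j}$ is determined by finitely many $t_{n,m}$. An element $\phi\in Q_*$ is regarded as the substitution $x_{i,j}\mapsto\phi_{i,j}$; $\bar t\le\bar s$ iff there is $\phi\in Q_*$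 with $\bar t=\bar s\circ\phi$. Sacks forcing is the set of perfect subtrees of $2^{<\omega}$ ordered by inclusion. *)

theory Defs
  imports Main "HOL-Library.Sublist"
begin

text \<open>An X-term is a finite sequence of variables (v_0,...,v_(l-1)) together with
a function f : 2^l -> 2, represented as a function on bool lists (only its values on
lists of length l matter).\<close>
type_synonym 'v trm = "'v list \<times> (bool list \<Rightarrow> bool)"

definition var_trm :: "'v \<Rightarrow> 'v trm" where
  "var_trm v = ([v], \<lambda>bs. hd bs)"

definition eval_trm :: "'v trm \<Rightarrow> ('v \<Rightarrow> bool) \<Rightarrow> bool" where
  "eval_trm t a = snd t (map a (fst t))"

fun chunks :: "'v trm list \<Rightarrow> bool list \<Rightarrow> bool list" where
  "chunks [] bs = []"
| "chunks (t # ts) bs = snd t (take (length (fst t)) bs) # chunks ts (drop (length (fst t)) bs)"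

definition subst_trm :: "'v trm \<Rightarrow> ('v \<Rightarrow> 'v trm) \<Rightarrow> 'v trm" where
  "subst_trm t \<phi> = (concat (map (\<lambda>v. fst (\<phi> v)) (fst t)),
                     \<lambda>bs. snd t (chunks (map \<phi> (fst t)) bs))"

definition trm_eq :: "'v trm \<Rightarrow> 'v trm \<Rightarrow> bool" (infix "=\<^sup>*" 50) where
  "t =\<^sup>* s \<longleftrightarrow> (\<forall>a. eval_trm t a = eval_trm s a)"

definition depends_only :: "'v trm \<Rightarrow> 'v set \<Rightarrow> bool" where
  "depends_only t Y \<longleftrightarrow> (\<exists>s. set (fst s) \<subseteq> Y \<and> t =\<^sup>* s)"

type_synonym idx = "nat \<times> nat"
type_synonym square = "idx \<Rightarrow> idx trm"

definition tau :: "idx \<Rightarrow> nat" where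
  "tau p = fst p + ((fst p + snd p) * (fst p + snd p + 1)) div 2"

definition tri_le :: "idx \<Rightarrow> idx \<Rightarrow> bool" where
  "tri_le p q \<longleftrightarrow> tau p \<le> tau q"

definition var_determined_by :: "idx \<Rightarrow> square \<Rightarrow> idx set \<Rightarrow> bool" where
  "var_determined_by x t F \<longleftrightarrow>
     (\<forall>a b. (\<forall>p\<in>F. eval_trm (t p) a = eval_trm (t p) b) \<longrightarrow> a x = b x)"

definition Qstar :: "square set" where
  "Qstar = {t. (\<forall>p. depends_only (t p) {x. tri_le x p})
              \<and> (\<forall>x. \<exists>F. finite F \<and> var_determined_by x t F)}"

definition subst_square :: "square \<Rightarrow> square \<Rightarrow> square" where
  "subst_square s \<phi> = (\<lambda>p. subst_trm (s p) \<phi>)"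

definition Qstar_le :: "square \<Rightarrow> square \<Rightarrow> bool" where
  "Qstar_le t s \<longleftrightarrow> (\<exists>\<phi>\<in>Qstar. \<forall>p. t p =\<^sup>* subst_square s \<phi> p)"

definition perfect_tree :: "bool list set \<Rightarrow> bool" where
  "perfect_tree T \<longleftrightarrow> T \<noteq> {}
     \<and> (\<forall>s\<in>T. \<forall>u. prefix u s \<longrightarrow> u \<in> T)
     \<and> (\<forall>s\<in>T. \<exists>u. prefix s u \<and> u @ [False] \<in> T \<and> u @ [True] \<in> T)"

definition Sacks :: "bool list set set" where
  "Sacks = {T. perfect_tree T}"

definition Sacks_le :: "bool list set \<Rightarrow> bool list set \<Rightarrow> bool" where
  "Sacks_le S T \<longleftrightarrow> S \<subseteq> T"

text \<open>Regular open subsets of a preorder (P, le) (topology of downward closed sets);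
they form the Boolean completion RO(P).\<close>
definition regular_open :: "'a set \<Rightarrow> ('a \<Rightarrow> 'a \<Rightarrow> bool) \<Rightarrow> 'a set set" where
  "regular_open P le = {U. U \<subseteq> P \<and>
      U = {p\<in>P. \<forall>q\<in>P. le q p \<longrightarrow> (\<exists>r\<in>U. le r q)}}"

text \<open>Two forcing notions are forcing equivalent iff their Boolean completions are isomorphic.\<close>
definition forcing_equivalent ::
  "'a set \<Rightarrow> ('a \<Rightarrow> 'a \<Rightarrow> bool) \<Rightarrow> 'b set \<Rightarrow> ('b \<Rightarrow> 'b \<Rightarrow> bool) \<Rightarrow> bool" where
  "forcing_equivalent P leP Q leQ \<longleftrightarrow>
     (\<exists>h. bij_betw h (regular_open P leP) (regular_open Q leQ)
        \<and> (\<forall>U\<in>regular_open P leP. \<forall>V\<in>regular_open P leP. U \<subseteq> V \<longleftrightarrow> h U \<subseteq> h V))"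

end

theory Submission
  imports Defs "HOL-Library.Nat_Bijection"
begin

lemma chunks_map:
  "chunks (map \<phi> vs) (concat (map (\<lambda>v. map a (fst (\<phi> v))) vs)) = map (\<lambda>v. eval_trm (\<phi> v) a) vs"
  by (induction vs) (simp_all add: eval_trm_def)

lemma eval_subst: "eval_trm (subst_trm t \<phi>) a = eval_trm t (\<lambda>v. eval_trm (\<phi> v) a)"
proof -
  have "map a (concat (map (\<lambda>v. fst (\<phi> v)) (fst t))) = concat (map (\<lambda>v. map a (fst (\<phi> v))) (fst t))"
    by (simp add: map_concat comp_def)
  then show ?thesis
    by (simp add: subst_trm_def eval_trm_def chunks_map comp_def)
qed

lemma depends_only_iff:
  "depends_only t Y \<longleftrightarrow> (\<forall>a b. (\<forall>y\<in>Y. a y = b y) \<longrightarrow> eval_trm t a = eval_trm t b)"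
proof
  assume "depends_only t Y"
  then obtain s where s: "set (fst s) \<subseteq> Y" "t =\<^sup>* s" unfolding depends_only_def by blast
  show "\<forall>a b. (\<forall>y\<in>Y. a y = b y) \<longrightarrow> eval_trm t a = eval_trm t b"
  proof (intro allI impI)
    fix a b :: "'a \<Rightarrow> bool" assume ab: "\<forall>y\<in>Y. a y = b y"
    have "map a (fst s) = map b (fst s)" using s(1) ab by (auto intro: map_cong)
    then show "eval_trm t a = eval_trm t b" using s(2) unfolding trm_eq_def eval_trm_def by metis
  qed
next
  assume H: "\<forall>a b. (\<forall>y\<in>Y. a y = b y) \<longrightarrow> eval_trm t a = eval_trm t b"
  define ys where "ys = filter (\<lambda>v. v \<in> Y) (fst t)"
  define s where "s = (ys, \<lambda>bs. eval_trm t (\<lambda>v. case map_of (zip ys bs) v of Some x \<Rightarrow> x | None \<Rightarrow> False))"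
  have "set (fst s) \<subseteq> Y" by (auto simp: s_def ys_def)
  moreover have "t =\<^sup>* s"
    unfolding trm_eq_def
  proof
    fix a
    define a1 where "a1 = (\<lambda>v. if v \<in> set ys then a v else False)"
    define a3 where "a3 = (\<lambda>v. if v \<in> Y then a v else a1 v)"
    have e1: "eval_trm s a = eval_trm t a1"
      by (simp add: s_def eval_trm_def map_of_zip_map a1_def)
    have "eval_trm t a3 = eval_trm t a" using H by (auto simp: a3_def)
    moreover have "map a3 (fst t) = map a1 (fst t)"
      by (auto simp: a3_def a1_def ys_def)
    then have "eval_trm t a3 = eval_trm t a1" by (simp only: eval_trm_def)
    ultimately show "eval_trm t a = eval_trm s a" using e1 by simp
  qed
  ultimately show "depends_only t Y" unfolding depends_only_def by blast
qed

lemma tau_eq: "tau = prod_encode"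
  by (auto simp: tau_def prod_encode_def triangle_def fun_eq_iff)

definition sem :: "square \<Rightarrow> (nat \<Rightarrow> bool) \<Rightarrow> nat \<Rightarrow> bool" where
  "sem t c k = eval_trm (t (prod_decode k)) (c \<circ> prod_encode)"

definition trng :: "((nat \<Rightarrow> bool) \<Rightarrow> nat \<Rightarrow> bool) \<Rightarrow> bool" where
  "trng F \<longleftrightarrow> (\<forall>c d k. (\<forall>i\<le>k. c i = d i) \<longrightarrow> F c k = F d k)"

definition dtm :: "((nat \<Rightarrow> bool) \<Rightarrow> nat \<Rightarrow> bool) \<Rightarrow> bool" where
  "dtm F \<longleftrightarrow> (\<forall>k. \<exists>N. \<forall>c d. (\<forall>i<N. F c i = F d i) \<longrightarrow> c k = d k)"

lemma sem_p: "sem t c (prod_encode p) = eval_trm (t p) (c \<circ> prod_encode)"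
  by (simp add: sem_def)

lemma sem_a: "sem t (a \<circ> prod_decode) (prod_encode p) = eval_trm (t p) a"
  by (simp add: sem_def comp_def)

lemma part1_iff: "(\<forall>p. depends_only (t p) {x. tri_le x p}) \<longleftrightarrow> trng (sem t)"
proof
  assume H: "\<forall>p. depends_only (t p) {x. tri_le x p}"
  show "trng (sem t)" unfolding trng_def
  proof (intro allI impI)
    fix c d :: "nat \<Rightarrow> bool" and k assume cd: "\<forall>i\<le>k. c i = d i"
    have "depends_only (t (prod_decode k)) {x. tri_le x (prod_decode k)}" using H by blast
    then have "\<forall>a b. (\<forall>y\<in>{x. tri_le x (prod_decode k)}. a y = b y) \<longrightarrow> eval_trm (t (prod_decode k)) a = eval_trm (t (prod_decode k)) b"
      by (simp add: depends_only_iff)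
    moreover have "\<forall>y\<in>{x. tri_le x (prod_decode k)}. (c \<circ> prod_encode) y = (d \<circ> prod_encode) y"
      using cd by (auto simp: tri_le_def tau_eq)
    ultimately show "sem t c k = sem t d k" unfolding sem_def by blast
  qed
next
  assume H: "trng (sem t)"
  show "\<forall>p. depends_only (t p) {x. tri_le x p}"
  proof (intro allI)
    fix p
    show "depends_only (t p) {x. tri_le x p}"
      unfolding depends_only_iff
    proof (intro allI impI)
      fix a b assume ab: "\<forall>y\<in>{x. tri_le x p}. a y = (b::idx \<Rightarrow> bool) y"
      have "\<forall>i\<le>prod_encode p. (a \<circ> prod_decode) i = (b \<circ> prod_decode) i"
      proof (intro allI impI)
        fix i assume "i \<le> prod_encode p"
        then have "prod_decode i \<in> {x. tri_le x p}" by (simp add: tri_le_def tau_eq)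
        then show "(a \<circ> prod_decode) i = (b \<circ> prod_decode) i" using ab by (cases "prod_decode i") auto
      qed
      then have "sem t (a \<circ> prod_decode) (prod_encode p) = sem t (b \<circ> prod_decode) (prod_encode p)"
        using H unfolding trng_def by blast
      then show "eval_trm (t p) a = eval_trm (t p) b" by (simp add: sem_a)
    qed
  qed
qed

lemma part2_iff: "(\<forall>x. \<exists>F. finite F \<and> var_determined_by x t F) \<longleftrightarrow> dtm (sem t)"
proof
  assume H: "\<forall>x. \<exists>F. finite F \<and> var_determined_by x t F"
  show "dtm (sem t)" unfolding dtm_def
  proof
    fix k
    obtain F where F: "finite F" "var_determined_by (prod_decode k) t F" using H by blast
    obtain N where N: "\<forall>n\<in>prod_encode ` F. n < N" using F(1) finite_nat_set_iff_bounded by blast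
    show "\<exists>N. \<forall>c d. (\<forall>i<N. sem t c i = sem t d i) \<longrightarrow> c k = d k"
    proof (intro exI allI impI)
      fix c d assume cd: "\<forall>i<N. sem t c i = sem t d i"
      have "\<forall>p\<in>F. eval_trm (t p) (c \<circ> prod_encode) = eval_trm (t p) (d \<circ> prod_encode)"
        using cd N by (metis image_eqI sem_p)
      then have "(c \<circ> prod_encode) (prod_decode k) = (d \<circ> prod_encode) (prod_decode k)"
        using F(2) unfolding var_determined_by_def by blast
      then show "c k = d k" by simp
    qed
  qed
next
  assume H: "dtm (sem t)"
  show "\<forall>x. \<exists>F. finite F \<and> var_determined_by x t F"
  proof
    fix x
    obtain N where N: "\<forall>c d. (\<forall>i<N. sem t c i = sem t d i) \<longrightarrow> c (prod_encode x) = d (prod_encode x)"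
      using H unfolding dtm_def by blast
    have "var_determined_by x t (prod_decode ` {..<N})"
      unfolding var_determined_by_def
    proof (intro allI impI)
      fix a b assume ab: "\<forall>p\<in>prod_decode ` {..<N}. eval_trm (t p) a = eval_trm (t p) b"
      have "\<forall>i<N. sem t (a \<circ> prod_decode) i = sem t (b \<circ> prod_decode) i"
        using ab by (metis lessThan_iff image_eqI prod_decode_inverse sem_a)
      then have "(a \<circ> prod_decode) (prod_encode x) = (b \<circ> prod_decode) (prod_encode x)" using N by blast
      then show "a x = b x" by simp
    qed
    then show "\<exists>F. finite F \<and> var_determined_by x t F" by blast
  qed
qed

lemma Qstar_iff: "t \<in> Qstar \<longleftrightarrow> trng (sem t) \<and> dtm (sem t)"
  unfolding Qstar_def using part1_iff part2_iff by blast

lemma sem_subst: "sem (subst_square t \<phi>) c = sem t (sem \<phi> c)"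
proof
  fix k
  have "(\<lambda>v. eval_trm (\<phi> v) (c \<circ> prod_encode)) = sem \<phi> c \<circ> prod_encode"
    by (simp add: fun_eq_iff sem_def)
  then show "sem (subst_square t \<phi>) c k = sem t (sem \<phi> c) k"
    by (simp add: sem_def subst_square_def eval_subst)
qed

lemma Qstar_le_iff: "Qstar_le t s \<longleftrightarrow> (\<exists>\<phi>\<in>Qstar. \<forall>c. sem t c = sem s (sem \<phi> c))"
proof -
  have "(\<forall>p. t p =\<^sup>* subst_square s \<phi> p) \<longleftrightarrow> (\<forall>c. sem t c = sem s (sem \<phi> c))" for \<phi>
  proof
    assume A: "\<forall>p. t p =\<^sup>* subst_square s \<phi> p"
    show "\<forall>c. sem t c = sem s (sem \<phi> c)"
    proof (intro allI ext)
      fix c k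
      have "eval_trm (t (prod_decode k)) (c \<circ> prod_encode) = eval_trm (subst_square s \<phi> (prod_decode k)) (c \<circ> prod_encode)"
        using A unfolding trm_eq_def by blast
      then have "sem t c k = sem (subst_square s \<phi>) c k" by (simp add: sem_def)
      then show "sem t c k = sem s (sem \<phi> c) k" by (simp add: sem_subst)
    qed
  next
    assume A: "\<forall>c. sem t c = sem s (sem \<phi> c)"
    show "\<forall>p. t p =\<^sup>* subst_square s \<phi> p"
      unfolding trm_eq_def
    proof (intro allI)
      fix p a
      have "sem t (a \<circ> prod_decode) (prod_encode p) = sem (subst_square s \<phi>) (a \<circ> prod_decode) (prod_encode p)"
        using A by (simp add: sem_subst)
      then show "eval_trm (t p) a = eval_trm (subst_square s \<phi> p) a" by (simp add: sem_a)
    qed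
  qed
  then show ?thesis unfolding Qstar_le_def by blast
qed

definition sq :: "((nat \<Rightarrow> bool) \<Rightarrow> nat \<Rightarrow> bool) \<Rightarrow> square" where
  "sq G p = (map prod_decode [0..<Suc (prod_encode p)], \<lambda>bs. G (\<lambda>i. i < length bs \<and> bs ! i) (prod_encode p))"

lemma sem_sq: assumes "trng G" shows "sem (sq G) = G"
proof (intro ext)
  fix c :: "nat \<Rightarrow> bool" and k
  have L: "map (c \<circ> prod_encode) (map prod_decode [0..<Suc k]) = map c [0..<Suc k]" by simp
  have L2: "(\<lambda>i. i < length (map c [0..<Suc k]) \<and> (map c [0..<Suc k]) ! i) = (\<lambda>i. i < Suc k \<and> c i)"
    by (auto simp: fun_eq_iff simp del: upt_Suc)
  have "sem (sq G) c k = G (\<lambda>i. i < length (map c [0..<Suc k]) \<and> (map c [0..<Suc k]) ! i) k"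
    unfolding sem_def sq_def eval_trm_def prod_decode_inverse snd_conv fst_conv L by simp
  also have "\<dots> = G (\<lambda>i. i < Suc k \<and> c i) k" unfolding L2 ..
  also have "\<dots> = G c k" using assms unfolding trng_def by auto
  finally show "sem (sq G) c k = G c k" .
qed

lemma sq_Qstar: "trng G \<Longrightarrow> dtm G \<Longrightarrow> sq G \<in> Qstar"
  by (simp add: Qstar_iff sem_sq)

lemma bound_choice:
  assumes "\<forall>i<(n::nat). \<exists>N::nat. P i N" "\<And>i N M. P i N \<Longrightarrow> N \<le> M \<Longrightarrow> P i M"
  shows "\<exists>N. \<forall>i<n. P i N"
  using assms(1)
proof (induction n)
  case 0 then show ?case by simp
next
  case (Suc n)
  then obtain N where N: "\<forall>i<n. P i N" by auto
  obtain M where M: "P n M" using Suc.prems by auto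
  have "\<forall>i<Suc n. P i (max N M)"
    using N M assms(2) by (metis less_Suc_eq max.cobounded1 max.cobounded2)
  then show ?case by blast
qed

lemma trng_comp: assumes F: "trng F" and G: "trng G" shows "trng (\<lambda>c. F (G c))"
  unfolding trng_def
proof (intro allI impI)
  fix c d :: "nat \<Rightarrow> bool" and k assume cd: "\<forall>i\<le>k. c i = d i"
  have "\<forall>i\<le>k. G c i = G d i"
  proof (intro allI impI)
    fix i assume "i \<le> k"
    then have "\<forall>j\<le>i. c j = d j" using cd by auto
    then show "G c i = G d i" using G unfolding trng_def by blast
  qed
  then show "F (G c) k = F (G d) k" using F unfolding trng_def by blast
qed

lemma dtm_comp:
  assumes F: "dtm F" and G: "dtm G"
  shows "dtm (\<lambda>c. F (G c))"
  unfolding dtm_def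
proof
  fix k
  obtain N1 where N1: "\<forall>c d. (\<forall>i<N1. G c i = G d i) \<longrightarrow> c k = d k" using G unfolding dtm_def by blast
  have "\<exists>M. \<forall>i<N1. (\<forall>x y. (\<forall>j<M. F x j = F y j) \<longrightarrow> x i = y i)"
    by (rule bound_choice) (use F in \<open>auto simp: dtm_def\<close>)
  then obtain M where M: "\<forall>i<N1. (\<forall>x y. (\<forall>j<M. F x j = F y j) \<longrightarrow> x i = y i)" by blast
  show "\<exists>N. \<forall>c d. (\<forall>i<N. F (G c) i = F (G d) i) \<longrightarrow> c k = d k"
  proof (intro exI[of _ M] allI impI)
    fix c d assume H: "\<forall>i<M. F (G c) i = F (G d) i"
    have "\<forall>i<N1. G c i = G d i" using M H by blast
    then show "c k = d k" using N1 by blast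
  qed
qed

lemma trng_id: "trng (\<lambda>c. c)" by (simp add: trng_def)
lemma dtm_id: "dtm (\<lambda>c. c)" unfolding dtm_def by (metis lessI)

lemma Qstar_le_refl: "Qstar_le t t"
proof -
  have "sq (\<lambda>c. c) \<in> Qstar" by (simp add: sq_Qstar trng_id dtm_id)
  then show ?thesis unfolding Qstar_le_iff using sem_sq[OF trng_id] by (intro bexI[of _ "sq (\<lambda>c. c)"]) auto
qed

lemma sem_subst_fun: "sem (subst_square t \<phi>) = (\<lambda>c. sem t (sem \<phi> c))"
  by (simp add: fun_eq_iff sem_subst)

lemma subst_Qstar: "t \<in> Qstar \<Longrightarrow> \<phi> \<in> Qstar \<Longrightarrow> subst_square t \<phi> \<in> Qstar"
  by (simp add: Qstar_iff sem_subst_fun trng_comp dtm_comp)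

lemma Qstar_le_trans:
  assumes "Qstar_le t s" "Qstar_le s u" shows "Qstar_le t u"
proof -
  obtain \<phi> where \<phi>: "\<phi> \<in> Qstar" "\<forall>c. sem t c = sem s (sem \<phi> c)" using assms(1) Qstar_le_iff by blast
  obtain \<psi> where \<psi>: "\<psi> \<in> Qstar" "\<forall>c. sem s c = sem u (sem \<psi> c)" using assms(2) Qstar_le_iff by blast
  have "subst_square \<psi> \<phi> \<in> Qstar" using \<phi> \<psi> subst_Qstar by blast
  moreover have "\<forall>c. sem t c = sem u (sem (subst_square \<psi> \<phi>) c)" using \<phi> \<psi> by (simp add: sem_subst)
  ultimately show ?thesis unfolding Qstar_le_iff by blast
qed

definition TrF :: "((nat \<Rightarrow> bool) \<Rightarrow> nat \<Rightarrow> bool) \<Rightarrow> bool list set" where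
  "TrF F = {\<sigma>. \<exists>c. \<forall>i<length \<sigma>. \<sigma> ! i = F c i}"

lemma perfect_TrF:
  assumes T: "trng F" and D: "dtm F"
  shows "perfect_tree (TrF F)"
  unfolding perfect_tree_def
proof (intro conjI ballI allI impI)
  have "[] \<in> TrF F" by (simp add: TrF_def)
  then show "TrF F \<noteq> {}" by blast
next
  fix s u assume "s \<in> TrF F" "prefix u s"
  then obtain c zs where "\<forall>i<length s. s ! i = F c i" "s = u @ zs" unfolding TrF_def prefix_def by blast
  then have "\<forall>i<length u. u ! i = F c i"
    by (metis (no_types, lifting) length_append nth_append trans_less_add1)
  then show "u \<in> TrF F" unfolding TrF_def by blast
next
  fix s assume "s \<in> TrF F"
  then obtain c where c: "\<forall>i<length s. s ! i = F c i" unfolding TrF_def by blast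
  define k where "k = length s"
  define d where "d = c(k := \<not> c k)"
  have agree: "\<forall>i<k. F c i = F d i"
  proof (intro allI impI)
    fix i assume "i < k"
    then have "\<forall>j\<le>i. c j = d j" by (simp add: d_def)
    then show "F c i = F d i" using T unfolding trng_def by blast
  qed
  have ne: "\<exists>j. F c j \<noteq> F d j"
  proof (rule ccontr)
    assume "\<not> (\<exists>j. F c j \<noteq> F d j)"
    then have "c k = d k" using D unfolding dtm_def by blast
    then show False by (simp add: d_def)
  qed
  define j where "j = (LEAST j. F c j \<noteq> F d j)"
  have j1: "F c j \<noteq> F d j" unfolding j_def by (rule LeastI_ex[OF ne])
  have below: "\<forall>i<j. F c i = F d i" unfolding j_def using not_less_Least by blast
  have kj: "k \<le> j" using agree j1 not_le by blast
  define u where "u = map (F c) [0..<j]"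
  have "s = take k u"
    by (rule nth_equalityI) (use kj c in \<open>auto simp: u_def k_def\<close>)
  then have pre: "prefix s u" by (simp add: take_is_prefix)
  have in1: "u @ [F c j] \<in> TrF F"
    unfolding TrF_def by (rule CollectI, rule exI[of _ c]) (auto simp: u_def nth_append less_Suc_eq)
  have in2: "u @ [F d j] \<in> TrF F"
    unfolding TrF_def by (rule CollectI, rule exI[of _ d]) (auto simp: u_def nth_append less_Suc_eq below)
  have "u @ [False] \<in> TrF F \<and> u @ [True] \<in> TrF F"
    using in1 in2 j1 by (cases "F c j") auto
  then show "\<exists>u. prefix s u \<and> u @ [False] \<in> TrF F \<and> u @ [True] \<in> TrF F" using pre by blast
qed

lemma TrF_mono:
  assumes "\<forall>c. F c = G (\<Phi> c)" shows "TrF F \<subseteq> TrF G"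
  unfolding TrF_def using assms by auto

lemma prefix_nth: "prefix xs ys \<Longrightarrow> i < length xs \<Longrightarrow> ys ! i = xs ! i"
  unfolding prefix_def by (auto simp: nth_append)

lemma perfect_mem_prefix: "perfect_tree T \<Longrightarrow> s \<in> T \<Longrightarrow> prefix u s \<Longrightarrow> u \<in> T"
  unfolding perfect_tree_def by blast

lemma perfect_Nil: "perfect_tree T \<Longrightarrow> [] \<in> T"
  unfolding perfect_tree_def using Nil_prefix by blast

definition splt :: "bool list set \<Rightarrow> bool list \<Rightarrow> bool list" where
  "splt T u = (SOME w. prefix u w \<and> w @ [False] \<in> T \<and> w @ [True] \<in> T)"

lemma splt_prop:
  assumes "perfect_tree T" "u \<in> T"
  shows "prefix u (splt T u) \<and> splt T u @ [False] \<in> T \<and> splt T u @ [True] \<in> T"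
proof -
  have "\<exists>w. prefix u w \<and> w @ [False] \<in> T \<and> w @ [True] \<in> T" using assms unfolding perfect_tree_def by blast
  then show ?thesis unfolding splt_def by (rule someI_ex)
qed

fun nd :: "bool list set \<Rightarrow> (nat \<Rightarrow> bool) \<Rightarrow> nat \<Rightarrow> bool list" where
  "nd T c 0 = splt T []"
| "nd T c (Suc n) = splt T (nd T c n @ [c n])"

definition GT :: "bool list set \<Rightarrow> (nat \<Rightarrow> bool) \<Rightarrow> nat \<Rightarrow> bool" where
  "GT T c k = nd T c (Suc k) ! k"

context
  fixes T assumes P: "perfect_tree T"
begin

lemma nd_prop: "nd T c n @ [False] \<in> T \<and> nd T c n @ [True] \<in> T"
proof (induction n)
  case 0 then show ?case using splt_prop[OF P perfect_Nil[OF P]] by simp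
next
  case (Suc n)
  then have "nd T c n @ [c n] \<in> T" by (cases "c n") auto
  then show ?case using splt_prop[OF P] by simp
qed

lemma nd_in: "nd T c n @ [b] \<in> T"
  using nd_prop by (cases b) auto

lemma nd_ext: "prefix (nd T c n @ [c n]) (nd T c (Suc n))"
  using splt_prop[OF P nd_in] by simp

lemma nd_len: "n \<le> length (nd T c n)"
proof (induction n)
  case 0 then show ?case by simp
next
  case (Suc n)
  have "length (nd T c n @ [c n]) \<le> length (nd T c (Suc n))" using nd_ext prefix_length_le by blast
  then show ?case using Suc by simp
qed

lemma nd_mono: "n \<le> m \<Longrightarrow> prefix (nd T c n) (nd T c m)"
proof (induction m rule: dec_induct)
  case base then show ?case by simp
next
  case (step m)
  have "prefix (nd T c m) (nd T c m @ [c m])" by simp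
  then have "prefix (nd T c m) (nd T c (Suc m))" using nd_ext prefix_order.trans by blast
  then show ?case using step.IH prefix_order.trans by blast
qed

lemma nd_in_T: "nd T c n \<in> T"
  using perfect_mem_prefix[OF P nd_in[of c n True]] by simp

lemma GT_nth: "j < length (nd T c m) \<Longrightarrow> GT T c j = nd T c m ! j"
proof -
  assume j: "j < length (nd T c m)"
  have j2: "j < length (nd T c (Suc j))" using nd_len[of "Suc j" c] by simp
  show ?thesis
  proof (cases "Suc j \<le> m")
    case True
    then show ?thesis unfolding GT_def using nd_mono prefix_nth j2 by metis
  next
    case False
    then show ?thesis unfolding GT_def using nd_mono prefix_nth j by (metis nat_le_linear)
  qed
qed

end

lemma nd_cong: "(\<forall>i<n. c i = d i) \<Longrightarrow> nd T c n = nd T d n"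
  by (induction n) auto

lemma GT_trng: "trng (GT T)"
  unfolding trng_def GT_def
proof (intro allI impI)
  fix c d :: "nat \<Rightarrow> bool" and k assume "\<forall>i\<le>k. c i = d i"
  then have "\<forall>i<Suc k. c i = d i" by auto
  then show "nd T c (Suc k) ! k = nd T d (Suc k) ! k" using nd_cong by metis
qed

lemma GT_sub:
  assumes P: "perfect_tree T" shows "TrF (GT T) \<subseteq> T"
proof
  fix s assume "s \<in> TrF (GT T)"
  then obtain c where c: "\<forall>i<length s. s ! i = GT T c i" unfolding TrF_def by blast
  define n where "n = length s"
  have "s = take n (nd T c n)"
    by (rule nth_equalityI) (use nd_len[OF P, of n c] c GT_nth[OF P] in \<open>auto simp: n_def\<close>)
  then show "s \<in> T" using perfect_mem_prefix[OF P nd_in_T[OF P] take_is_prefix] by metis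
qed

lemma GT_dtm:
  assumes P: "perfect_tree T" shows "dtm (GT T)"
proof -
  define ext where "ext = (\<lambda>\<sigma>::bool list. \<lambda>i. i < length \<sigma> \<and> \<sigma> ! i)"
  define B where "B = (\<lambda>k. Max ((\<lambda>\<sigma>. length (nd T (ext \<sigma>) k)) ` {\<sigma>. set \<sigma> \<subseteq> UNIV \<and> length \<sigma> = k}))"
  have Bk: "length (nd T c k) \<le> B k" for c k
  proof -
    define \<sigma> where "\<sigma> = map c [0..<k]"
    have "nd T c k = nd T (ext \<sigma>) k" by (rule nd_cong) (simp add: ext_def \<sigma>_def)
    moreover have "finite {\<sigma>::bool list. set \<sigma> \<subseteq> UNIV \<and> length \<sigma> = k}"
      by (rule finite_lists_length_eq) simp
    moreover have "\<sigma> \<in> {\<sigma>. set \<sigma> \<subseteq> UNIV \<and> length \<sigma> = k}" by (simp add: \<sigma>_def)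
    ultimately show ?thesis unfolding B_def by (metis (no_types, lifting) Max_ge finite_imageI image_eqI)
  qed
  have ALL: "\<exists>N. \<forall>c d. (\<forall>i<N. GT T c i = GT T d i) \<longrightarrow> (\<forall>i<k. c i = d i)" for k
  proof (induction k)
    case 0 then show ?case by simp
  next
    case (Suc k)
    then obtain N' where N': "\<forall>c d. (\<forall>i<N'. GT T c i = GT T d i) \<longrightarrow> (\<forall>i<k. c i = d i)" by blast
    show ?case
    proof (intro exI[of _ "max N' (Suc (B k))"] allI impI)
      fix c d i assume H: "\<forall>i<max N' (Suc (B k)). GT T c i = GT T d i" and i: "i < Suc k"
      then have ck: "\<forall>i<k. c i = d i" using N' by simp
      then have eq: "nd T c k = nd T d k" by (rule nd_cong)
      define l where "l = length (nd T c k)"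
      have lN: "l < max N' (Suc (B k))" using Bk[of c k] by (simp add: l_def)
      have "c k = GT T c l"
      proof -
        have p: "prefix (nd T c k @ [c k]) (nd T c (Suc k))" by (rule nd_ext[OF P])
        then have "l < length (nd T c (Suc k))" using prefix_length_le unfolding l_def by fastforce
        then have "GT T c l = nd T c (Suc k) ! l" by (rule GT_nth[OF P])
        also have "\<dots> = (nd T c k @ [c k]) ! l" using prefix_nth[OF p] by (simp add: l_def)
        finally show ?thesis by (simp add: l_def)
      qed
      moreover have "d k = GT T d l"
      proof -
        have p: "prefix (nd T d k @ [d k]) (nd T d (Suc k))" by (rule nd_ext[OF P])
        then have "l < length (nd T d (Suc k))" using prefix_length_le eq unfolding l_def by fastforce
        then have "GT T d l = nd T d (Suc k) ! l" by (rule GT_nth[OF P])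
        also have "\<dots> = (nd T d k @ [d k]) ! l" using prefix_nth[OF p] eq by (simp add: l_def)
        finally show ?thesis using eq by (simp add: l_def)
      qed
      ultimately have "c k = d k" using H lN by simp
      then show "c i = d i" using ck i less_Suc_eq by auto
    qed
  qed
  show ?thesis unfolding dtm_def
  proof
    fix k
    obtain N where N: "\<forall>c d. (\<forall>i<N. GT T c i = GT T d i) \<longrightarrow> (\<forall>i<Suc k. c i = d i)"
      using ALL[of "Suc k"] by blast
    show "\<exists>N. \<forall>c d. (\<forall>i<N. GT T c i = GT T d i) \<longrightarrow> c k = d k"
    proof (intro exI[of _ N] allI impI)
      fix c d assume "\<forall>i<N. GT T c i = GT T d i"
      then have "\<forall>i<Suc k. c i = d i" using N by blast
      then show "c k = d k" by simp
    qed
  qed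
qed

lemma trng_le: "trng F \<Longrightarrow> (\<forall>i<N. c i = d i) \<Longrightarrow> (\<forall>i<N. F c i = F d i)"
  unfolding trng_def by (metis le_less_trans)

fun hh :: "(nat \<Rightarrow> nat) \<Rightarrow> nat \<Rightarrow> nat" where
  "hh Ns 0 = 0"
| "hh Ns (Suc k) = max (Suc (hh Ns k)) (Ns k)"

lemma key:
  assumes Ts: "trng Fs" and Ds: "dtm Fs" and Tt: "trng Ft" and Dt: "dtm Ft"
    and H: "TrF Ft \<subseteq> TrF Fs"
  shows "\<exists>\<psi> \<phi>. trng \<psi> \<and> dtm \<psi> \<and> trng \<phi> \<and> dtm \<phi> \<and> (\<forall>d. Ft (\<psi> d) = Fs (\<phi> d))"
proof -
  have H2: "\<exists>b. \<forall>i<n. Fs b i = Ft c i" for c n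
  proof -
    have "map (Ft c) [0..<n] \<in> TrF Ft" unfolding TrF_def by auto
    then have "map (Ft c) [0..<n] \<in> TrF Fs" using H by blast
    then obtain b where "\<forall>i<n. map (Ft c) [0..<n] ! i = Fs b i" unfolding TrF_def by auto
    then show ?thesis by auto
  qed
  define Ns where "Ns = (\<lambda>k. SOME N. \<forall>b b'. (\<forall>i<N. Fs b i = Fs b' i) \<longrightarrow> b k = b' k)"
  have NsP: "\<forall>b b'. (\<forall>i<Ns k. Fs b i = Fs b' i) \<longrightarrow> b k = b' k" for k
  proof -
    have "\<exists>N. \<forall>b b'. (\<forall>i<N. Fs b i = Fs b' i) \<longrightarrow> b k = b' k" using Ds unfolding dtm_def by blast
    then show ?thesis unfolding Ns_def by (rule someI_ex)
  qed
  define wit where "wit = (\<lambda>c n. SOME b. \<forall>i<n. Fs b i = Ft c i)"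
  have witP: "\<forall>i<n. Fs (wit c n) i = Ft c i" for c n
    unfolding wit_def using H2 by (rule someI_ex)
  define \<phi>0 where "\<phi>0 = (\<lambda>c k. wit c (Ns k) k)"
  have claimA: "Fs (\<phi>0 c) = Ft c" for c
  proof
    fix j
    have "\<exists>N. \<forall>i<Suc j. Ns i \<le> N \<and> j < N"
    proof (rule bound_choice)
      show "\<forall>i<Suc j. \<exists>N. Ns i \<le> N \<and> j < N"
      proof (intro allI impI)
        fix i show "\<exists>N. Ns i \<le> N \<and> j < N" by (rule exI[of _ "Ns i + Suc j"]) simp
      qed
    qed auto
    then obtain N where N0: "\<forall>i<Suc j. Ns i \<le> N \<and> j < N" by blast
    have N: "\<forall>i\<le>j. Ns i \<le> N" "j < N" using N0 by (auto simp: less_Suc_eq_le)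
    define b where "b = wit c N"
    have "\<forall>i\<le>j. \<phi>0 c i = b i"
    proof (intro allI impI)
      fix i assume "i \<le> j"
      then have "\<forall>l<Ns i. Fs (wit c (Ns i)) l = Fs b l"
        using witP N(1) unfolding b_def by (metis order_less_le_trans)
      then show "\<phi>0 c i = b i" using NsP unfolding \<phi>0_def by blast
    qed
    then have "Fs (\<phi>0 c) j = Fs b j" using Ts unfolding trng_def by blast
    also have "\<dots> = Ft c j" using witP N(2) unfolding b_def by blast
    finally show "Fs (\<phi>0 c) j = Ft c j" .
  qed
  have claimB: "\<phi>0 c k = \<phi>0 c' k" if cc: "\<forall>i<Ns k. c i = c' i" for c c' k
  proof -
    have "\<forall>l<Ns k. Ft c l = Ft c' l" using trng_le[OF Tt cc] .
    then have "(\<lambda>b. \<forall>i<Ns k. Fs b i = Ft c i) = (\<lambda>b. \<forall>i<Ns k. Fs b i = Ft c' i)" by auto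
    then show ?thesis unfolding \<phi>0_def wit_def by simp
  qed
  define h where "h = hh Ns"
  have hsm: "strict_mono h" unfolding strict_mono_Suc_iff h_def by (simp add: less_max_iff_disj)
  have hNs: "Ns k \<le> h (Suc k)" for k unfolding h_def by simp
  have hinc: "i \<le> h i" for i using strict_mono_imp_increasing[OF hsm] by simp
  have hinj: "inj h" using strict_mono_imp_inj_on[OF hsm] .
  define \<psi> where "\<psi> = (\<lambda>d m. if m \<in> range h then d (inv h m) else False)"
  have \<psi>h: "\<psi> d (h i) = d i" for d i unfolding \<psi>_def using hinj by simp
  have \<psi>T: "trng \<psi>" unfolding trng_def
  proof (intro allI impI)
    fix d d' :: "nat \<Rightarrow> bool" and k assume dd: "\<forall>i\<le>k. d i = d' i"
    show "\<psi> d k = \<psi> d' k"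
    proof (cases "k \<in> range h")
      case True
      then obtain i where "k = h i" by blast
      then show ?thesis using dd hinc \<psi>h by metis
    next
      case False then show ?thesis unfolding \<psi>_def by simp
    qed
  qed
  have \<psi>D: "dtm \<psi>" unfolding dtm_def
  proof
    fix k
    show "\<exists>N. \<forall>d d'. (\<forall>i<N. \<psi> d i = \<psi> d' i) \<longrightarrow> d k = d' k"
      by (rule exI[of _ "Suc (h k)"]) (metis \<psi>h lessI)
  qed
  define \<phi> where "\<phi> = (\<lambda>d. \<phi>0 (\<psi> d))"
  have \<phi>T: "trng \<phi>" unfolding trng_def
  proof (intro allI impI)
    fix d d' :: "nat \<Rightarrow> bool" and k assume dd: "\<forall>i\<le>k. d i = d' i"
    have "\<forall>i<Ns k. \<psi> d i = \<psi> d' i"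
    proof (intro allI impI)
      fix i assume i: "i < Ns k"
      show "\<psi> d i = \<psi> d' i"
      proof (cases "i \<in> range h")
        case True
        then obtain j where j: "i = h j" by blast
        then have "h j < h (Suc k)" using i hNs[of k] by simp
        then have "j \<le> k" using strict_mono_less[OF hsm] by simp
        then show ?thesis using dd j \<psi>h by metis
      next
        case False then show ?thesis unfolding \<psi>_def by simp
      qed
    qed
    then show "\<phi> d k = \<phi> d' k" unfolding \<phi>_def by (rule claimB)
  qed
  have eqA: "Ft (\<psi> d) = Fs (\<phi> d)" for d unfolding \<phi>_def using claimA by simp
  have \<phi>D: "dtm \<phi>" unfolding dtm_def
  proof
    fix k
    obtain N where N: "\<forall>x y. (\<forall>i<N. Ft x i = Ft y i) \<longrightarrow> x (h k) = y (h k)"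
      using Dt unfolding dtm_def by blast
    show "\<exists>N. \<forall>d d'. (\<forall>i<N. \<phi> d i = \<phi> d' i) \<longrightarrow> d k = d' k"
    proof (intro exI[of _ N] allI impI)
      fix d d' assume dd: "\<forall>i<N. \<phi> d i = \<phi> d' i"
      have "\<forall>i<N. Fs (\<phi> d) i = Fs (\<phi> d') i" using trng_le[OF Ts dd] .
      then have "\<forall>i<N. Ft (\<psi> d) i = Ft (\<psi> d') i" using eqA by simp
      then have "\<psi> d (h k) = \<psi> d' (h k)" using N by blast
      then show "d k = d' k" using \<psi>h by simp
    qed
  qed
  show ?thesis using \<psi>T \<psi>D \<phi>T \<phi>D eqA by blast
qed

lemma ro_iff:
  "U \<in> regular_open P le \<longleftrightarrow> U \<subseteq> P \<and> (\<forall>p\<in>U. \<forall>q\<in>P. le q p \<longrightarrow> (\<exists>r\<in>U. le r q))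
      \<and> (\<forall>p\<in>P. (\<forall>q\<in>P. le q p \<longrightarrow> (\<exists>r\<in>U. le r q)) \<longrightarrow> p \<in> U)"
  unfolding regular_open_def by blast

lemma ro_elim: "U \<in> regular_open P le \<Longrightarrow> p \<in> P \<Longrightarrow> (\<And>q. q \<in> P \<Longrightarrow> le q p \<Longrightarrow> \<exists>r\<in>U. le r q) \<Longrightarrow> p \<in> U"
  unfolding ro_iff by blast

lemma ro_sub: "U \<in> regular_open P le \<Longrightarrow> U \<subseteq> P"
  unfolding ro_iff by blast

lemma ro_down:
  assumes tr: "\<forall>p\<in>P. \<forall>q\<in>P. \<forall>r\<in>P. le p q \<longrightarrow> le q r \<longrightarrow> le p r"
    and U: "U \<in> regular_open P le" and p: "p \<in> U" and q: "q \<in> P" "le q p"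
  shows "q \<in> U"
proof (rule ro_elim[OF U q(1)])
  fix q' assume q': "q' \<in> P" "le q' q"
  have pP: "p \<in> P" using ro_sub[OF U] p by blast
  have "le q' p" using tr q'(1) q(1) pP q'(2) q(2) by blast
  then show "\<exists>r\<in>U. le r q'" using U p q' pP unfolding ro_iff by blast
qed

lemma ro_iso:
  fixes P :: "'a set" and le :: "'a \<Rightarrow> 'a \<Rightarrow> bool" and Q :: "'b set" and leQ :: "'b \<Rightarrow> 'b \<Rightarrow> bool"
    and \<pi> :: "'a \<Rightarrow> 'b"
  assumes reflP: "\<And>p. p\<in>P \<Longrightarrow> le p p"
    and transP: "\<And>p q r. p\<in>P \<Longrightarrow> q\<in>P \<Longrightarrow> r\<in>P \<Longrightarrow> le p q \<Longrightarrow> le q r \<Longrightarrow> le p r"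
    and reflQ: "\<And>p. p\<in>Q \<Longrightarrow> leQ p p"
    and transQ: "\<And>p q r. p\<in>Q \<Longrightarrow> q\<in>Q \<Longrightarrow> r\<in>Q \<Longrightarrow> leQ p q \<Longrightarrow> leQ q r \<Longrightarrow> leQ p r"
    and piQ: "\<And>p. p\<in>P \<Longrightarrow> \<pi> p \<in> Q"
    and mono: "\<And>p p'. p\<in>P \<Longrightarrow> p'\<in>P \<Longrightarrow> le p p' \<Longrightarrow> leQ (\<pi> p) (\<pi> p')"
    and dense: "\<And>q. q\<in>Q \<Longrightarrow> \<exists>p\<in>P. leQ (\<pi> p) q"
    and proj: "\<And>p q. p\<in>P \<Longrightarrow> q\<in>Q \<Longrightarrow> leQ q (\<pi> p) \<Longrightarrow> \<exists>p'\<in>P. le p' p \<and> leQ (\<pi> p') q"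
    and comp: "\<And>p p'. p\<in>P \<Longrightarrow> p'\<in>P \<Longrightarrow> leQ (\<pi> p) (\<pi> p') \<Longrightarrow> \<exists>p''\<in>P. le p'' p \<and> le p'' p'"
  shows "forcing_equivalent P le Q leQ"
proof -
  have transP': "\<forall>p\<in>P. \<forall>q\<in>P. \<forall>r\<in>P. le p q \<longrightarrow> le q r \<longrightarrow> le p r" using transP by blast
  have transQ': "\<forall>p\<in>Q. \<forall>q\<in>Q. \<forall>r\<in>Q. leQ p q \<longrightarrow> leQ q r \<longrightarrow> leQ p r" using transQ by blast
  define g where "g = (\<lambda>V. {p\<in>P. \<pi> p \<in> V})"
  define h where "h = (\<lambda>U. {q\<in>Q. \<forall>q'\<in>Q. leQ q' q \<longrightarrow> (\<exists>p\<in>U. leQ (\<pi> p) q')})"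
  have g_ro: "g V \<in> regular_open P le" if V: "V \<in> regular_open Q leQ" for V
    unfolding ro_iff
  proof (intro conjI ballI impI)
    show "g V \<subseteq> P" unfolding g_def by blast
  next
    fix p q assume p: "p \<in> g V" and q: "q \<in> P" "le q p"
    have pP: "p \<in> P" and pV: "\<pi> p \<in> V" using p unfolding g_def by auto
    have "\<pi> q \<in> V" using ro_down[OF transQ' V pV piQ[OF q(1)] mono[OF q(1) pP q(2)]] by blast
    then show "\<exists>r\<in>g V. le r q" using q reflP unfolding g_def by blast
  next
    fix p assume pP: "p \<in> P" and H: "\<forall>q\<in>P. le q p \<longrightarrow> (\<exists>r\<in>g V. le r q)"
    have "\<pi> p \<in> V"
    proof (rule ro_elim[OF V piQ[OF pP]])
      fix q assume q: "q \<in> Q" "leQ q (\<pi> p)"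
      obtain p' where p': "p' \<in> P" "le p' p" "leQ (\<pi> p') q" using proj[OF pP q] by blast
      obtain r where r: "r \<in> g V" "le r p'" using H p' by blast
      have rP: "r \<in> P" "\<pi> r \<in> V" using r unfolding g_def by auto
      have "leQ (\<pi> r) q" using transQ[OF piQ[OF rP(1)] piQ[OF p'(1)] q(1) mono[OF rP(1) p'(1) r(2)] p'(3)] .
      then show "\<exists>r\<in>V. leQ r q" using rP by blast
    qed
    then show "p \<in> g V" using pP unfolding g_def by blast
  qed
  have h_ro: "h U \<in> regular_open Q leQ" if U: "U \<in> regular_open P le" for U
    unfolding ro_iff
  proof (intro conjI ballI impI)
    show "h U \<subseteq> Q" unfolding h_def by blast
  next
    fix q q' assume q: "q \<in> h U" and q': "q' \<in> Q" "leQ q' q"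
    have "q' \<in> h U" unfolding h_def
    proof (intro CollectI conjI ballI impI)
      show "q' \<in> Q" by fact
      fix q'' assume "q'' \<in> Q" "leQ q'' q'"
      then have "leQ q'' q" using transQ q q' unfolding h_def by blast
      then show "\<exists>p\<in>U. leQ (\<pi> p) q''" using q \<open>q'' \<in> Q\<close> unfolding h_def by blast
    qed
    then show "\<exists>r\<in>h U. leQ r q'" using reflQ q' by blast
  next
    fix q assume qQ: "q \<in> Q" and H: "\<forall>q'\<in>Q. leQ q' q \<longrightarrow> (\<exists>r\<in>h U. leQ r q')"
    show "q \<in> h U" unfolding h_def
    proof (intro CollectI conjI ballI impI)
      show "q \<in> Q" by fact
      fix q' assume q': "q' \<in> Q" "leQ q' q"
      obtain r where r: "r \<in> h U" "leQ r q'" using H q' by blast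
      have rQ: "r \<in> Q" using r unfolding h_def by blast
      obtain p where p: "p \<in> U" "leQ (\<pi> p) r" using r(1) reflQ[OF rQ] rQ unfolding h_def by blast
      have pP: "p \<in> P" using ro_sub[OF U] p by blast
      show "\<exists>p\<in>U. leQ (\<pi> p) q'" using p transQ[OF piQ[OF pP] rQ q'(1) p(2) r(2)] by blast
    qed
  qed
  have ghU: "g (h U) = U" if U: "U \<in> regular_open P le" for U
  proof
    show "U \<subseteq> g (h U)"
    proof
      fix p assume p: "p \<in> U"
      have pP: "p \<in> P" using ro_sub[OF U] p by blast
      have "\<pi> p \<in> h U" unfolding h_def
      proof (intro CollectI conjI ballI impI)
        show "\<pi> p \<in> Q" using piQ[OF pP] .
        fix q' assume q': "q' \<in> Q" "leQ q' (\<pi> p)"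
        obtain p' where p': "p' \<in> P" "le p' p" "leQ (\<pi> p') q'" using proj[OF pP q'] by blast
        have "p' \<in> U" using ro_down[OF transP' U p p'(1,2)] .
        then show "\<exists>p\<in>U. leQ (\<pi> p) q'" using p' by blast
      qed
      then show "p \<in> g (h U)" using pP unfolding g_def by blast
    qed
  next
    show "g (h U) \<subseteq> U"
    proof
      fix p assume "p \<in> g (h U)"
      then have pP: "p \<in> P" and ph: "\<pi> p \<in> h U" unfolding g_def by auto
      show "p \<in> U"
      proof (rule ro_elim[OF U pP])
        fix p' assume p': "p' \<in> P" "le p' p"
        have "leQ (\<pi> p') (\<pi> p)" using mono[OF p'(1) pP p'(2)] .
        then obtain p1 where p1: "p1 \<in> U" "leQ (\<pi> p1) (\<pi> p')" using ph piQ[OF p'(1)] unfolding h_def by blast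
        have p1P: "p1 \<in> P" using ro_sub[OF U] p1 by blast
        obtain p'' where p'': "p'' \<in> P" "le p'' p1" "le p'' p'" using comp[OF p1P p'(1) p1(2)] by blast
        have "p'' \<in> U" using ro_down[OF transP' U p1(1) p''(1,2)] .
        then show "\<exists>r\<in>U. le r p'" using p'' by blast
      qed
    qed
  qed
  have hgV: "h (g V) = V" if V: "V \<in> regular_open Q leQ" for V
  proof
    show "h (g V) \<subseteq> V"
    proof
      fix q assume q: "q \<in> h (g V)"
      then have qQ: "q \<in> Q" unfolding h_def by blast
      show "q \<in> V"
      proof (rule ro_elim[OF V qQ])
        fix q' assume q': "q' \<in> Q" "leQ q' q"
        then obtain p where "p \<in> g V" "leQ (\<pi> p) q'" using q unfolding h_def by blast
        then show "\<exists>r\<in>V. leQ r q'" unfolding g_def by blast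
      qed
    qed
  next
    show "V \<subseteq> h (g V)"
    proof
      fix q assume q: "q \<in> V"
      have qQ: "q \<in> Q" using ro_sub[OF V] q by blast
      show "q \<in> h (g V)" unfolding h_def
      proof (intro CollectI conjI ballI impI)
        show "q \<in> Q" by fact
        fix q' assume q': "q' \<in> Q" "leQ q' q"
        obtain p where p: "p \<in> P" "leQ (\<pi> p) q'" using dense[OF q'(1)] by blast
        have "leQ (\<pi> p) q" using transQ[OF piQ[OF p(1)] q'(1) qQ p(2) q'(2)] .
        then have "\<pi> p \<in> V" using ro_down[OF transQ' V q piQ[OF p(1)]] by blast
        then show "\<exists>p\<in>g V. leQ (\<pi> p) q'" using p unfolding g_def by blast
      qed
    qed
  qed
  have bij: "bij_betw h (regular_open P le) (regular_open Q leQ)"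
    by (rule bij_betw_byWitness[where f' = g]) (use ghU hgV h_ro g_ro in auto)
  have ord: "U \<subseteq> V \<longleftrightarrow> h U \<subseteq> h V" if U: "U \<in> regular_open P le" and V: "V \<in> regular_open P le" for U V
  proof
    assume "U \<subseteq> V" then show "h U \<subseteq> h V" unfolding h_def by blast
  next
    assume "h U \<subseteq> h V"
    then have "g (h U) \<subseteq> g (h V)" unfolding g_def by blast
    then show "U \<subseteq> V" using ghU[OF U] ghU[OF V] by simp
  qed
  show ?thesis unfolding forcing_equivalent_def using bij ord by blast
qed

theorem mainTheorem3:
  shows "forcing_equivalent Qstar Qstar_le Sacks Sacks_le"
proof (rule ro_iso[where \<pi> = "\<lambda>t. TrF (sem t)"])
  show "\<And>p. p \<in> Qstar \<Longrightarrow> Qstar_le p p" by (rule Qstar_le_refl)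
  show "\<And>p q r. Qstar_le p q \<Longrightarrow> Qstar_le q r \<Longrightarrow> Qstar_le p r" by (rule Qstar_le_trans)
  show "\<And>p. Sacks_le p p" by (simp add: Sacks_le_def)
  show "\<And>p q r. Sacks_le p q \<Longrightarrow> Sacks_le q r \<Longrightarrow> Sacks_le p r" by (auto simp: Sacks_le_def)
  show "\<And>p. p \<in> Qstar \<Longrightarrow> TrF (sem p) \<in> Sacks"
    by (simp add: Sacks_def Qstar_iff perfect_TrF)
  show "\<And>p p'. Qstar_le p p' \<Longrightarrow> Sacks_le (TrF (sem p)) (TrF (sem p'))"
    unfolding Sacks_le_def Qstar_le_iff using TrF_mono by blast
next
  fix T assume "T \<in> Sacks"
  then have P: "perfect_tree T" by (simp add: Sacks_def)
  have "sq (GT T) \<in> Qstar" by (rule sq_Qstar[OF GT_trng GT_dtm[OF P]])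
  moreover have "Sacks_le (TrF (sem (sq (GT T)))) T"
    using sem_sq[OF GT_trng] GT_sub[OF P] by (simp add: Sacks_le_def)
  ultimately show "\<exists>p\<in>Qstar. Sacks_le (TrF (sem p)) T" by blast
next
  fix p T assume p: "p \<in> Qstar" and "T \<in> Sacks" and sub: "Sacks_le T (TrF (sem p))"
  then have P: "perfect_tree T" by (simp add: Sacks_def)
  have sp: "trng (sem p)" "dtm (sem p)" using p Qstar_iff by auto
  have "TrF (GT T) \<subseteq> TrF (sem p)" using GT_sub[OF P] sub unfolding Sacks_le_def by blast
  then obtain \<psi> \<phi> where k: "trng \<psi>" "dtm \<psi>" "trng \<phi>" "dtm \<phi>" "\<forall>d. GT T (\<psi> d) = sem p (\<phi> d)"
    using key[OF sp GT_trng GT_dtm[OF P]] by blast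
  define p' where "p' = subst_square p (sq \<phi>)"
  have sqQ: "sq \<phi> \<in> Qstar" using sq_Qstar k by blast
  have "p' \<in> Qstar" unfolding p'_def using subst_Qstar[OF p sqQ] .
  moreover have "Qstar_le p' p" unfolding Qstar_le_iff p'_def using sqQ sem_subst by blast
  moreover have "Sacks_le (TrF (sem p')) T"
  proof -
    have "\<forall>c. sem p' c = GT T (\<psi> c)" using k sem_sq[OF k(3)] by (simp add: p'_def sem_subst)
    then have "TrF (sem p') \<subseteq> TrF (GT T)" by (rule TrF_mono)
    then show ?thesis using GT_sub[OF P] unfolding Sacks_le_def by blast
  qed
  ultimately show "\<exists>p'\<in>Qstar. Qstar_le p' p \<and> Sacks_le (TrF (sem p')) T" by blast
next
  fix p p' assume p: "p \<in> Qstar" and p': "p' \<in> Qstar" and sub: "Sacks_le (TrF (sem p)) (TrF (sem p'))"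
  have sp: "trng (sem p)" "dtm (sem p)" using p Qstar_iff by auto
  have sp': "trng (sem p')" "dtm (sem p')" using p' Qstar_iff by auto
  obtain \<psi> \<phi> where k: "trng \<psi>" "dtm \<psi>" "trng \<phi>" "dtm \<phi>" "\<forall>d. sem p (\<psi> d) = sem p' (\<phi> d)"
    using key[OF sp' sp] sub unfolding Sacks_le_def by blast
  define p'' where "p'' = subst_square p (sq \<psi>)"
  have sq1: "sq \<psi> \<in> Qstar" using sq_Qstar k by blast
  have sq2: "sq \<phi> \<in> Qstar" using sq_Qstar k by blast
  have "p'' \<in> Qstar" unfolding p''_def using subst_Qstar[OF p sq1] .
  moreover have "Qstar_le p'' p" unfolding Qstar_le_iff p''_def using sq1 sem_subst by blast
  moreover have "Qstar_le p'' p'"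
  proof -
    have "\<forall>c. sem p'' c = sem p' (sem (sq \<phi>) c)"
      using k sem_sq[OF k(1)] sem_sq[OF k(3)] by (simp add: p''_def sem_subst)
    then show ?thesis unfolding Qstar_le_iff using sq2 by blast
  qed
  ultimately show "\<exists>p''\<in>Qstar. Qstar_le p'' p \<and> Qstar_le p'' p'" by blast
qed

end
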